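(* Let $q$ be a prime power and let $\mathcal{C}$ be an $[n,k]_q$ MWS code. (1) If $\mathcal{C}$ satisfies property (A), then there exists an $[N,k+1]_q$ MWS code with $N=2n+1$. (2) Let $q\ge 3$. If $\mathcal{C}$ satisfies both property (A) and property (B), then there exists an $[N,k+1]_q$ MWS code which satisfies property (B), where $N=(q-1)n+(q-2)+(T+1)\frac{(q-2)(q-3)}{2}$ and $T=\max\{c[\beta]: c\in\mathcal{C}\setminus\{0\},\ \beta\in\mathbb{F}_q^*\}$.
   Context: Fix a primitive element $\alpha$ of $\mathbb{F}_q$. An $[n,k]_q$ code is a $k$-dimensional subspace of $\mathbb{F}_q^n$ with Hamming weight $w(c)=|\{i:c_i\ne 0\}|$; codes of dimension $\ge 2$ are assumed non-degenerate (no coordinate identically zero on the code). $w(\mathcal{C})=\{w(c):c\in\mathcal{C}\setminus\{0\}\}$ and $\mathcal{C}$ is MWS if $|w(\mathcal{C})|=\frac{q^k-1}{q-1}$. For $c\in\mathbb{F}_q^n$ and $\beta\in\mathbb{F}_q$, $c[\beta]=|\{i: c_i=\beta\}|$, and the entries distribution vector is $V(c)=(c[\alpha],c[\alpha^2],\dots,c[\alpha^{q-1}],c[0])\in\mathbb{N}^q$. Property (A): there exists $\beta\in\mathbb{F}_q^*$ such that for $a,b\in\mathcal{C}$, $a[\beta]=b[\beta]$ only if $a=b$. Property (B): for every $c\in\mathcal{C}\setminus\{0\}$, the $q$ entries of $V(c)$ are pairwise distinct. *)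

theory Defs
  imports Complex_Main "HOL-Library.Function_Algebras" "HOL-Library.Cardinality"
begin

text \<open>Vectors of F_q^n are represented as functions nat => 'a that vanish at all
  indices >= n. The finite field F_q is a type 'a of class finite and field;
  q = CARD('a) is then automatically a prime power.\<close>

definition vsc :: "'a::field \<Rightarrow> (nat \<Rightarrow> 'a) \<Rightarrow> (nat \<Rightarrow> 'a)" where
  "vsc a c = (\<lambda>i. a * c i)"

definition vecs :: "nat \<Rightarrow> (nat \<Rightarrow> 'a::zero) set" where
  "vecs n = {c. \<forall>i\<ge>n. c i = 0}"

definition lin_code :: "nat \<Rightarrow> nat \<Rightarrow> (nat \<Rightarrow> 'a::{finite,field}) set \<Rightarrow> bool" where
  "lin_code n k C \<longleftrightarrow> C \<subseteq> vecs n \<and> module.subspace vsc C \<and> vector_space.dim vsc C = k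
     \<and> (k \<ge> 2 \<longrightarrow> (\<forall>i<n. \<exists>c\<in>C. c i \<noteq> 0))"

definition hw :: "nat \<Rightarrow> (nat \<Rightarrow> 'a::zero) \<Rightarrow> nat" where
  "hw n c = card {i\<in>{..<n}. c i \<noteq> 0}"

definition cnt :: "nat \<Rightarrow> (nat \<Rightarrow> 'a) \<Rightarrow> 'a \<Rightarrow> nat" where
  "cnt n c b = card {i\<in>{..<n}. c i = b}"

definition MWS :: "nat \<Rightarrow> nat \<Rightarrow> (nat \<Rightarrow> 'a::{finite,field}) set \<Rightarrow> bool" where
  "MWS n k C \<longleftrightarrow> card (hw n ` (C - {0})) = (CARD('a) ^ k - 1) div (CARD('a) - 1)"

definition propA :: "nat \<Rightarrow> (nat \<Rightarrow> 'a::{finite,field}) set \<Rightarrow> bool" where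
  "propA n C \<longleftrightarrow> (\<exists>b. b \<noteq> 0 \<and> (\<forall>x\<in>C. \<forall>y\<in>C. cnt n x b = cnt n y b \<longrightarrow> x = y))"

text \<open>The entries of V(c) are c[beta] for beta ranging over all of F_q
  (alpha, ..., alpha^(q-1), 0 enumerate F_q), so pairwise distinctness is
  injectivity of beta |-> c[beta].\<close>
definition propB :: "nat \<Rightarrow> (nat \<Rightarrow> 'a::{finite,field}) set \<Rightarrow> bool" where
  "propB n C \<longleftrightarrow> (\<forall>c\<in>C - {0}. inj (cnt n c))"

definition maxT :: "nat \<Rightarrow> (nat \<Rightarrow> 'a::{finite,field}) set \<Rightarrow> nat" where
  "maxT n C = Max {cnt n c b | c b. c \<in> C - {0} \<and> b \<noteq> 0}"

end

theory Submission
  imports Defs "HOL-Library.Multiset" "HOL-Library.FuncSet"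
begin

lemma vsc_vs: "vector_space (vsc :: 'a::field \<Rightarrow> (nat \<Rightarrow> 'a) \<Rightarrow> (nat \<Rightarrow> 'a))"
  by unfold_locales (auto simp: vsc_def fun_eq_iff algebra_simps)

interpretation V: vector_space "vsc :: 'a::field \<Rightarrow> (nat \<Rightarrow> 'a) \<Rightarrow> (nat \<Rightarrow> 'a)"
  by (rule vsc_vs)

lemma vsc_apply: "vsc a c i = a * c i"
  by (simp add: vsc_def)

lemma vecs_subspace: "V.subspace (vecs n :: (nat \<Rightarrow> 'a::field) set)"
  unfolding V.subspace_def vecs_def by (auto simp: vsc_apply)

lemma vecs_finite: "finite (vecs n :: (nat \<Rightarrow> 'a::{finite,zero}) set)"
proof -
  have "inj_on (\<lambda>f. restrict f {..<n}) (vecs n :: (nat \<Rightarrow> 'a) set)"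
    unfolding vecs_def inj_on_def restrict_def fun_eq_iff
    by (metis (mono_tags, lifting) lessThan_iff mem_Collect_eq not_le)
  moreover have "(\<lambda>f. restrict f {..<n}) ` (vecs n :: (nat \<Rightarrow> 'a) set) \<subseteq> PiE {..<n} (\<lambda>_. UNIV)"
    by (auto split: if_splits)
  moreover have "finite (PiE {..<n} (\<lambda>_. (UNIV :: 'a set)))"
    by (rule finite_PiE) auto
  ultimately show ?thesis
    by (metis finite_imageD finite_subset)
qed

lemma card_span_insert:
  fixes S :: "(nat \<Rightarrow> 'a::{finite,field}) set"
  assumes fin: "finite (V.span S)" and u: "u \<notin> V.span S"
  shows "card (V.span (insert u S)) = card (V.span S) * CARD('a)"
proof -
  have eq: "V.span (insert u S) = (\<lambda>(x,l). x + vsc l u) ` (V.span S \<times> UNIV)"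
  proof -
    have "V.span (insert u S) = {x. \<exists>k. x - vsc k u \<in> V.span S}"
      by (rule V.span_insert)
    also have "\<dots> = (\<lambda>(x,l). x + vsc l u) ` (V.span S \<times> UNIV)"
    proof (intro set_eqI iffI)
      fix x assume "x \<in> {x. \<exists>k. x - vsc k u \<in> V.span S}"
      then obtain k where "x - vsc k u \<in> V.span S" by blast
      then show "x \<in> (\<lambda>(x,l). x + vsc l u) ` (V.span S \<times> UNIV)"
        by (intro image_eqI[where x="(x - vsc k u, k)"]) auto
    next
      fix x assume "x \<in> (\<lambda>(x,l). x + vsc l u) ` (V.span S \<times> UNIV)"
      then obtain y l where "y \<in> V.span S" "x = y + vsc l u" by force
      then have "x - vsc l u \<in> V.span S" by simp
      then show "x \<in> {x. \<exists>k. x - vsc k u \<in> V.span S}" by blast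
    qed
    finally show ?thesis .
  qed
  have inj: "inj_on (\<lambda>(x,l). x + vsc l u) (V.span S \<times> UNIV)"
  proof (rule inj_onI, clarsimp)
    fix x l x' l'
    assume x: "x \<in> V.span S" and x': "x' \<in> V.span S" and e: "x + vsc l u = x' + vsc l' u"
    have "vsc (l - l') u = x' - x"
      using e by (simp add: fun_eq_iff algebra_simps vsc_apply)
    moreover have "x' - x \<in> V.span S" using x x' by (simp add: V.span_diff)
    ultimately have ll: "l = l'"
    proof (cases "l = l'")
      case False
      assume h: "vsc (l - l') u = x' - x" "x' - x \<in> V.span S"
      have "vsc (inverse (l - l')) (vsc (l - l') u) = u"
        using False by (simp add: fun_eq_iff vsc_apply)
      then have "u \<in> V.span S" using h V.span_scale[of "x' - x" S "inverse (l - l')"] by simp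
      then show ?thesis using u by simp
    qed simp
    then show "x = x' \<and> l = l'" using e by simp
  qed
  show ?thesis
    unfolding eq card_image[OF inj] card_cartesian_product by simp
qed

lemma span_vecs:
  assumes "B \<subseteq> (vecs n :: (nat \<Rightarrow> 'a::field) set)"
  shows "V.span B \<subseteq> vecs n"
  using V.span_minimal[OF assms vecs_subspace] .

lemma card_span_indep:
  fixes B :: "(nat \<Rightarrow> 'a::{finite,field}) set"
  assumes "finite B" "B \<subseteq> vecs n" "V.independent B"
  shows "card (V.span B) = CARD('a) ^ card B"
  using assms
proof (induction B rule: finite_induct)
  case empty
  then show ?case by simp
next
  case (insert b B)
  have ind: "V.independent B" "b \<notin> V.span B"
    using insert.prems(2) insert.hyps(2) by (auto simp: V.independent_insert)
  have fin: "finite (V.span B)"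
    using span_vecs[of B n] insert.prems(1) vecs_finite finite_subset by blast
  have "card (V.span (insert b B)) = card (V.span B) * CARD('a)"
    by (rule card_span_insert[OF fin ind(2)])
  also have "\<dots> = CARD('a) ^ card (insert b B)"
    using insert.IH[OF _ ind(1)] insert.prems(1) insert.hyps by simp
  finally show ?case .
qed

lemma code_card:
  fixes C :: "(nat \<Rightarrow> 'a::{finite,field}) set"
  assumes "lin_code n k C"
  shows "card C = CARD('a) ^ k" "finite C"
proof -
  have C: "C \<subseteq> vecs n" "V.subspace C" "V.dim C = k"
    using assms by (auto simp: lin_code_def)
  show fC: "finite C" using C(1) vecs_finite finite_subset by blast
  obtain B where B: "B \<subseteq> C" "V.independent B" "C \<subseteq> V.span B" "card B = V.dim C"
    using V.basis_exists by blast
  have "V.span B = C"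
    using B(1,3) V.span_minimal[OF B(1) C(2)] by blast
  moreover have "finite B" using B(1) fC finite_subset by blast
  ultimately show "card C = CARD('a) ^ k"
    using card_span_indep[of B n] B C by auto
qed

lemma card_filter_compl:
  "card {i\<in>{..<n::nat}. P i} + card {i\<in>{..<n}. \<not> P i} = n"
proof -
  have "{i\<in>{..<n::nat}. P i} \<union> {i\<in>{..<n}. \<not> P i} = {..<n}" by auto
  moreover have "card ({i\<in>{..<n::nat}. P i} \<union> {i\<in>{..<n}. \<not> P i})
     = card {i\<in>{..<n::nat}. P i} + card {i\<in>{..<n}. \<not> P i}"
    by (rule card_Un_disjoint) auto
  ultimately show ?thesis by simp
qed

lemma cnt_le: "cnt n c x \<le> n"
  unfolding cnt_def using card_mono[of "{..<n}" "{i\<in>{..<n}. c i = x}"] by auto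

lemma hw_cnt: "hw N v = N - cnt N v 0"
  unfolding hw_def cnt_def using card_filter_compl[of N "\<lambda>i. v i = 0"] by auto

lemma cnt_split:
  assumes "n \<le> N"
  shows "cnt N v x = cnt n v x + card {i\<in>{n..<N}. v i = x}"
proof -
  have "{i\<in>{..<N}. v i = x} = {i\<in>{..<n}. v i = x} \<union> {i\<in>{n..<N}. v i = x}"
    using assms by auto
  moreover have "card ({i\<in>{..<n}. v i = x} \<union> {i\<in>{n..<N}. v i = x})
     = card {i\<in>{..<n}. v i = x} + card {i\<in>{n..<N}. v i = x}"
    by (rule card_Un_disjoint) auto
  ultimately show ?thesis unfolding cnt_def by simp
qed

lemma cnt_scale:
  fixes c :: "nat \<Rightarrow> 'a::field"
  assumes "l \<noteq> 0"
  shows "cnt n c (l * y) = cnt n (vsc (inverse l) c) y"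
proof -
  have "{i\<in>{..<n}. c i = l * y} = {i\<in>{..<n}. vsc (inverse l) c i = y}"
    using assms by (auto simp: vsc_apply field_simps)
  then show ?thesis unfolding cnt_def by simp
qed

lemma cnt_zero_vec: "cnt n (0 :: nat \<Rightarrow> 'a::zero) x = (if x = 0 then n else 0)"
  unfolding cnt_def by auto

context
  fixes C :: "(nat \<Rightarrow> 'a::{finite,field}) set" and n k N :: nat and b :: 'a and g :: "nat \<Rightarrow> 'a"
  assumes lc: "lin_code n k C" and bnz: "b \<noteq> 0"
    and NN: "2*n+1 \<le> N" and gnz: "\<forall>i\<in>{n..<N}. g i \<noteq> 0"
begin

definition uu :: "nat \<Rightarrow> 'a" where
  "uu = (\<lambda>i. if i < n then - b else if i < N then g i else 0)"

lemma C_facts: "C \<subseteq> vecs n" "V.subspace C" "V.span C = C" "V.dim C = k"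
  using lc by (auto simp: lin_code_def)

lemma C_zero: "c \<in> C \<Longrightarrow> n \<le> i \<Longrightarrow> c i = 0"
  using C_facts(1) by (auto simp: vecs_def)

lemma u_notin: "uu \<notin> C"
proof
  assume "uu \<in> C"
  then have "uu n = 0" using C_zero by blast
  moreover have "uu n = g n" using NN by (simp add: uu_def)
  ultimately show False using gnz NN by auto
qed

lemma decomp:
  assumes "v \<in> V.span (insert uu C)"
  obtains c l where "c \<in> C" "v = c + vsc l uu"
proof -
  from assms obtain l where "v - vsc l uu \<in> V.span C"
    using V.span_insert by blast
  then have "v - vsc l uu \<in> C" using C_facts(3) by simp
  then show ?thesis using that[of "v - vsc l uu" l] by simp
qed

lemma D_mem: "c \<in> C \<Longrightarrow> c + vsc l uu \<in> V.span (insert uu C)"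
  by (intro V.span_add V.span_scale V.span_base) auto

lemma val: "c \<in> C \<Longrightarrow> (c + vsc l uu) i = (if i < n then c i - l * b else if i < N then l * g i else 0)"
  using C_zero[of c i] by (auto simp: uu_def vsc_apply)

lemma hw0: "c \<in> C \<Longrightarrow> hw N c = hw n c"
proof -
  assume c: "c \<in> C"
  have "{i\<in>{..<N}. c i \<noteq> 0} = {i\<in>{..<n}. c i \<noteq> 0}"
    using C_zero[OF c] NN by (auto, metis not_le)
  then show ?thesis unfolding hw_def by simp
qed

lemma cntv:
  assumes c: "c \<in> C"
  shows "cnt N (c + vsc l uu) x = cnt n c (x + l*b) + card {i\<in>{n..<N}. l * g i = x}"
proof -
  have "cnt N (c + vsc l uu) x = cnt n (c + vsc l uu) x + card {i\<in>{n..<N}. (c + vsc l uu) i = x}"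
    by (rule cnt_split) (use NN in simp)
  moreover have "cnt n (c + vsc l uu) x = cnt n c (x + l*b)"
    unfolding cnt_def by (intro arg_cong[where f=card]) (use C_zero[of c] in \<open>auto simp: uu_def vsc_apply algebra_simps\<close>)
  moreover have "{i\<in>{n..<N}. (c + vsc l uu) i = x} = {i\<in>{n..<N}. l * g i = x}"
    using C_zero[of c] c by (auto simp: uu_def vsc_apply)
  ultimately show ?thesis by simp
qed

lemma hwl:
  assumes c: "c \<in> C" and l: "l \<noteq> 0"
  shows "hw N (c + vsc l uu) = N - cnt n c (l*b)"
proof -
  have "{i\<in>{n..<N}. l * g i = 0} = {}" using l gnz by auto
  then have "cnt N (c + vsc l uu) 0 = cnt n c (l*b)"
    using cntv[OF c, of l 0] by simp
  then show ?thesis by (simp add: hw_cnt)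
qed

lemma D_lin: "lin_code N (k+1) (V.span (insert uu C))"
proof -
  have u_vecs: "uu \<in> vecs N" using NN by (auto simp: vecs_def uu_def)
  have "C \<subseteq> vecs N" using C_facts(1) NN by (auto simp: vecs_def)
  then have sub: "V.span (insert uu C) \<subseteq> vecs N"
    using span_vecs[of "insert uu C" N] u_vecs by blast
  have dim: "V.dim (V.span (insert uu C)) = k + 1"
  proof -
    obtain B where B: "B \<subseteq> C" "V.independent B" "C \<subseteq> V.span B" "card B = V.dim C"
      using V.basis_exists by blast
    have spB: "V.span B = C"
      using B(1,3) V.span_minimal[OF B(1) C_facts(2)] by blast
    have fB: "finite B" using B(1) code_card(2)[OF lc] finite_subset by blast
    have ind: "V.independent (insert uu B)"
      using V.independent_insertI[OF _ B(2)] u_notin spB by simp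
    have "V.span (insert uu B) = V.span (insert uu C)"
      unfolding V.span_eq using B(1) spB
      by (auto intro: V.span_base V.span_mono[of B "insert uu B", THEN subsetD])
    then have "V.span (insert uu B) = V.span (V.span (insert uu C))" by (simp add: V.span_span)
    then have "V.dim (V.span (insert uu C)) = card (insert uu B)"
      using V.dim_eq_card[OF _ ind] by blast
    also have "\<dots> = k + 1" using fB B(1,4) u_notin C_facts(4) by (auto simp: card_insert_if)
    finally show ?thesis .
  qed
  have nd: "\<forall>i<N. \<exists>c\<in>V.span (insert uu C). c i \<noteq> 0"
  proof (intro allI impI)
    fix i assume i: "i < N"
    have "uu \<in> V.span (insert uu C)" by (intro V.span_base) auto
    moreover have "uu i \<noteq> 0" using i bnz gnz by (auto simp: uu_def)
    ultimately show "\<exists>c\<in>V.span (insert uu C). c i \<noteq> 0" by blast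
  qed
  show ?thesis unfolding lin_code_def using sub dim nd by simp
qed

lemma hw_le: "hw n c \<le> n"
  by (simp add: hw_cnt)

lemma mws_arith:
  assumes "(q::nat) \<ge> 2"
  shows "(q^k - 1) div (q-1) + q^k = (q^(k+1) - 1) div (q-1)"
proof -
  have pos: "q^k \<ge> 1" using assms by simp
  have "q^(k+1) - 1 = (q^k - 1) + q^k * (q-1)"
    using pos assms by (simp add: algebra_simps)
  moreover have "q - 1 \<noteq> 0" using assms by simp
  ultimately show ?thesis using div_mult_self1[of "q-1" "q^k - 1" "q^k"] by simp
qed

lemma card_ge2: "CARD('b::field) \<ge> 2 \<or> infinite (UNIV :: 'b set)"
proof (cases "finite (UNIV :: 'b set)")
  case True
  have "card {0::'b, 1} \<le> CARD('b)" by (rule card_mono[OF True]) auto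
  then show ?thesis by simp
qed simp

lemma D_MWS:
  assumes mws: "MWS n k C" and injb: "\<forall>x\<in>C. \<forall>y\<in>C. cnt n x b = cnt n y b \<longrightarrow> x = y"
  shows "MWS N (k+1) (V.span (insert uu C))"
proof -
  let ?D = "V.span (insert uu C)"
  let ?f = "\<lambda>c. N - cnt n c b"
  have img: "hw N ` (?D - {0}) = hw n ` (C - {0}) \<union> ?f ` C"
  proof (intro set_eqI iffI)
    fix w assume "w \<in> hw N ` (?D - {0})"
    then obtain v where v: "v \<in> ?D" "v \<noteq> 0" "w = hw N v" by blast
    obtain c l where cl: "c \<in> C" "v = c + vsc l uu" using decomp[OF v(1)] by blast
    show "w \<in> hw n ` (C - {0}) \<union> ?f ` C"
    proof (cases "l = 0")
      case True
      then have "v = c" using cl by (simp add: fun_eq_iff vsc_apply)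
      then show ?thesis using v cl hw0 by auto
    next
      case False
      have "w = N - cnt n (vsc (inverse l) c) b"
        using v cl hwl[OF cl(1) False] cnt_scale[OF False] by simp
      moreover have "vsc (inverse l) c \<in> C" using C_facts(2) cl(1) V.subspace_scale by blast
      ultimately show ?thesis by blast
    qed
  next
    fix w assume "w \<in> hw n ` (C - {0}) \<union> ?f ` C"
    then show "w \<in> hw N ` (?D - {0})"
    proof
      assume "w \<in> hw n ` (C - {0})"
      then obtain c where c: "c \<in> C" "c \<noteq> 0" "w = hw n c" by blast
      have "c \<in> ?D" by (intro V.span_base) (use c in auto)
      then show ?thesis using c hw0 by (metis DiffI image_eqI singletonD)
    next
      assume "w \<in> ?f ` C"
      then obtain c where c: "c \<in> C" "w = ?f c" by blast
      have m: "c + vsc 1 uu \<in> ?D" by (rule D_mem[OF c(1)])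
      have nn: "(c + vsc 1 uu) n \<noteq> 0" using val[OF c(1), of 1 n] NN gnz by simp
      have nz: "c + vsc 1 uu \<noteq> 0"
      proof
        assume h: "c + vsc 1 uu = 0"
        have "(c + vsc 1 uu) n = 0" unfolding h by simp
        then show False using nn by blast
      qed
      have "w = hw N (c + vsc 1 uu)" using hwl[OF c(1), of 1] c by simp
      then show ?thesis using m nz by blast
    qed
  qed
  have fC: "finite C" using code_card[OF lc] by simp
  have disj: "hw n ` (C - {0}) \<inter> ?f ` C = {}"
  proof -
    have "\<And>c d. hw n c \<noteq> ?f d"
    proof -
      fix c d
      have "hw n c \<le> n" "cnt n d b \<le> n" by (rule hw_le, rule cnt_le)
      then show "hw n c \<noteq> ?f d" using NN by linarith
    qed
    then show ?thesis by blast
  qed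
  have inj: "inj_on ?f C"
  proof (rule inj_onI)
    fix x y assume "x \<in> C" "y \<in> C" "?f x = ?f y"
    moreover have "cnt n x b \<le> N" "cnt n y b \<le> N" using cnt_le[of n x b] cnt_le[of n y b] NN by auto
    ultimately show "x = y" using injb by (metis diff_diff_cancel)
  qed
  have "card (hw N ` (?D - {0})) = card (hw n ` (C - {0})) + card (?f ` C)"
    unfolding img by (rule card_Un_disjoint) (use fC disj in auto)
  also have "\<dots> = (CARD('a)^k - 1) div (CARD('a) - 1) + CARD('a)^k"
    using mws card_image[OF inj] code_card[OF lc] unfolding MWS_def by simp
  also have "\<dots> = (CARD('a)^(k+1) - 1) div (CARD('a) - 1)"
    using mws_arith card_ge2[where 'b='a] by simp
  finally show ?thesis unfolding MWS_def .
qed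

lemma blocks_eq:
  fixes a a' m m' T :: nat
  assumes "a \<le> T" "a' \<le> T" "a + m*(T+1) = a' + m'*(T+1)"
  shows "m = m'"
proof -
  have "(a + m*(T+1)) div (T+1) = m + a div (T+1)" by (rule div_mult_self1) simp
  moreover have "a div (T+1) = 0" using assms(1) by simp
  moreover have "(a' + m'*(T+1)) div (T+1) = m' + a' div (T+1)" by (rule div_mult_self1) simp
  moreover have "a' div (T+1) = 0" using assms(2) by simp
  ultimately show ?thesis using assms(3) by simp
qed

lemma D_propB:
  fixes T :: nat and j :: "'a \<Rightarrow> nat"
  assumes pB: "propB n C" and n1: "n \<ge> 1"
    and Tb: "\<forall>c\<in>C - {0}. \<forall>z. z \<noteq> 0 \<longrightarrow> cnt n c z \<le> T"
    and hG: "\<forall>y. card {i\<in>{n..<N}. g i = y} = (if y = 0 \<or> y = - b then 0 else n + 1 + j y * (T+1))"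
    and jinj: "inj_on j (UNIV - {0, - b})"
  shows "propB N (V.span (insert uu C))"
  unfolding propB_def
proof (intro ballI)
  fix v assume "v \<in> V.span (insert uu C) - {0}"
  then have v: "v \<in> V.span (insert uu C)" "v \<noteq> 0" by auto
  obtain c l where cl: "c \<in> C" "v = c + vsc l uu" using decomp[OF v(1)] by blast
  have Tc: "\<And>z. z \<noteq> 0 \<Longrightarrow> cnt n c z \<le> T"
    using Tb cl(1) by (cases "c = 0") (auto simp: cnt_zero_vec)
  show "inj (cnt N v)"
  proof (cases "l = 0")
    case True
    then have vc: "v = c" using cl by (simp add: fun_eq_iff vsc_apply)
    then have c0: "c \<noteq> 0" using v by simp
    have injc: "inj (cnt n c)" using pB cl(1) c0 unfolding propB_def by blast
    have e: "\<And>x. cnt N v x = cnt n c x + (if x = 0 then N - n else 0)"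
    proof -
      fix x
      have "cnt N v x = cnt n c (x + l*b) + card {i\<in>{n..<N}. l * g i = x}"
        using cntv[OF cl(1)] cl by simp
      moreover have "{i\<in>{n..<N}. l * g i = x} = (if x = 0 then {n..<N} else {})"
        using True by auto
      moreover have "card {i\<in>{n..<N}. l * g i = x} = (if x = 0 then N - n else 0)"
        unfolding calculation(2) by simp
      ultimately show "cnt N v x = cnt n c x + (if x = 0 then N - n else 0)" using True by simp
    qed
    show ?thesis
    proof (rule injI)
      fix x x' assume h: "cnt N v x = cnt N v x'"
      have lt: "\<And>z. cnt n c z < N - n"
      proof -
        fix z have "cnt n c z \<le> n" by (rule cnt_le)
        then show "cnt n c z < N - n" using NN by linarith
      qed
      show "x = x'"
      proof (cases "x = 0 \<longleftrightarrow> x' = 0")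
        case True
        then have "cnt n c x = cnt n c x'" using h e by (cases "x = 0") auto
        then show ?thesis using injc by (simp add: inj_eq)
      next
        case False
        then show ?thesis using h e lt[of x] lt[of x'] by (cases "x = 0") auto
      qed
    qed
  next
    case False
    define G where "G y = card {i\<in>{n..<N}. g i = y}" for y
    have e: "\<And>x. cnt N v x = cnt n c (x + l*b) + G (x / l)"
    proof -
      fix x
      have "{i\<in>{n..<N}. l * g i = x} = {i\<in>{n..<N}. g i = x / l}"
        using False by (auto simp: field_simps)
      then show "cnt N v x = cnt n c (x + l*b) + G (x / l)"
        using cntv[OF cl(1)] cl unfolding G_def by simp
    qed
    have small: "\<And>x. x / l = 0 \<or> x / l = - b \<Longrightarrow> cnt N v x \<le> n"
      using e hG cnt_le unfolding G_def by simp
    have big: "\<And>x. \<not> (x / l = 0 \<or> x / l = - b) \<Longrightarrow>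
        cnt N v x = cnt n c (x + l*b) + (n + 1 + j (x / l) * (T+1)) \<and> cnt n c (x + l*b) \<le> T"
    proof -
      fix x assume nx: "\<not> (x / l = 0 \<or> x / l = - b)"
      have "x + l * b \<noteq> 0"
      proof
        assume "x + l * b = 0"
        then have "x = - (l * b)" by (simp add: eq_neg_iff_add_eq_0)
        then have "x / l = - b" using False by simp
        then show False using nx by simp
      qed
      then show "cnt N v x = cnt n c (x + l*b) + (n + 1 + j (x / l) * (T+1)) \<and> cnt n c (x + l*b) \<le> T"
        using e[of x] hG nx Tc unfolding G_def by simp
    qed
    show ?thesis
    proof (rule injI)
      fix x x' assume h: "cnt N v x = cnt N v x'"
      show "x = x'"
      proof (cases "x / l = 0 \<or> x / l = - b")
        case True
        show ?thesis
        proof (cases "x' / l = 0 \<or> x' / l = - b")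
          case True2: True
          have two: "x = 0 \<or> x = - (l*b)" "x' = 0 \<or> x' = - (l*b)"
            using True True2 False by (auto simp: field_simps)
          have ee: "cnt N v 0 = cnt n c (l*b)" "cnt N v (- (l*b)) = cnt n c 0"
            using e[of 0] e[of "- (l*b)"] hG False unfolding G_def by auto
          have neq: "cnt n c (l*b) \<noteq> cnt n c 0"
          proof (cases "c = 0")
            case True
            then show ?thesis using n1 bnz False by (simp add: cnt_zero_vec)
          next
            case c0: False
            have "inj (cnt n c)" using pB cl(1) c0 unfolding propB_def by blast
            then show ?thesis using bnz False by (simp add: inj_eq)
          qed
          show ?thesis using two h ee neq by auto
        next
          case False2: False
          have "cnt N v x \<le> n" by (rule small[OF True])
          moreover have "cnt N v x' > n" using big[OF False2] by simp
          ultimately show ?thesis using h by simp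
        qed
      next
        case False1: False
        show ?thesis
        proof (cases "x' / l = 0 \<or> x' / l = - b")
          case True2: True
          have "cnt N v x' \<le> n" by (rule small[OF True2])
          moreover have "cnt N v x > n" using big[OF False1] by simp
          ultimately show ?thesis using h by simp
        next
          case False2: False
          have b1: "cnt n c (x + l*b) + (n + 1) + j (x / l) * (T+1) = cnt n c (x' + l*b) + (n + 1) + j (x' / l) * (T+1)"
            using big[OF False1] big[OF False2] h by simp
          have "j (x / l) = j (x' / l)"
            by (rule blocks_eq[of "cnt n c (x + l*b)" T "cnt n c (x' + l*b)"]) (use big[OF False1] big[OF False2] b1 in simp_all)
          then have "x / l = x' / l" using jinj False1 False2 by (auto dest: inj_onD)
          then show ?thesis using False by (simp add: field_simps)
        qed
      qed
    qed
  qed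
qed

lemma D_exists:
  assumes "MWS n k C" "\<forall>x\<in>C. \<forall>y\<in>C. cnt n x b = cnt n y b \<longrightarrow> x = y"
  shows "\<exists>D :: (nat \<Rightarrow> 'a) set. lin_code N (k+1) D \<and> MWS N (k+1) D"
  using D_lin D_MWS[OF assms] by blast

lemma D_exists_B:
  fixes T :: nat and j :: "'a \<Rightarrow> nat"
  assumes "MWS n k C" "\<forall>x\<in>C. \<forall>y\<in>C. cnt n x b = cnt n y b \<longrightarrow> x = y"
    and "propB n C" "n \<ge> 1"
    and "\<forall>c\<in>C - {0}. \<forall>z. z \<noteq> 0 \<longrightarrow> cnt n c z \<le> T"
    and "\<forall>y. card {i\<in>{n..<N}. g i = y} = (if y = 0 \<or> y = - b then 0 else n + 1 + j y * (T+1))"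
    and "inj_on j (UNIV - {0, - b})"
  shows "\<exists>D :: (nat \<Rightarrow> 'a) set. lin_code N (k+1) D \<and> MWS N (k+1) D \<and> propB N D"
  using D_lin D_MWS[OF assms(1,2)] D_propB[OF assms(3-7)] by blast

end

lemma count_list_filter: "count_list xs y = length (filter (\<lambda>z. z = y) xs)"
  by (induct xs) auto

lemma exists_g:
  fixes G :: "'a::finite \<Rightarrow> nat"
  shows "\<exists>g::nat \<Rightarrow> 'a. \<forall>y. card {i\<in>{n..<n + sum G UNIV}. g i = y} = G y"
proof -
  have cM: "count (Abs_multiset G) = G" by (rule count_Abs_multiset) simp
  obtain xs where xs: "mset xs = Abs_multiset G" using ex_mset by blast
  have cl: "\<And>y. count_list xs y = G y" using xs cM count_mset by metis
  have len: "length xs = sum G UNIV"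
    using sum_count_set[of xs UNIV] cl by simp
  define g where "g i = xs ! (i - n)" for i
  have "\<forall>y. card {i\<in>{n..<n + length xs}. g i = y} = G y"
  proof
    fix y
    have "{i\<in>{n..<n + length xs}. g i = y} = (\<lambda>i. i + n) ` {i. i < length xs \<and> xs ! i = y}"
    proof (intro set_eqI iffI)
      fix i assume "i \<in> {i\<in>{n..<n + length xs}. g i = y}"
      then show "i \<in> (\<lambda>i. i + n) ` {i. i < length xs \<and> xs ! i = y}"
        by (intro image_eqI[where x="i - n"]) (auto simp: g_def)
    qed (auto simp: g_def)
    moreover have "inj (\<lambda>i::nat. i + n)" by (simp add: inj_def)
    ultimately have "card {i\<in>{n..<n + length xs}. g i = y} = card {i. i < length xs \<and> xs ! i = y}"
      by (simp add: card_image inj_on_subset)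
    also have "\<dots> = G y"
      using cl[of y] count_list_filter[of xs y] length_filter_conv_card[of "\<lambda>z. z = y" xs] by simp
    finally show "card {i\<in>{n..<n + length xs}. g i = y} = G y" .
  qed
  then show ?thesis unfolding len by blast
qed

lemma gauss_lt: "2 * (\<Sum>m<p. m) = p * (p - 1 :: nat)"
proof (induct p)
  case (Suc p)
  then show ?case by (cases p) (auto simp: algebra_simps)
qed simp

theorem mainTheorem3:
  fixes C :: "(nat \<Rightarrow> 'a::{finite,field}) set"
  assumes "lin_code n k C" and "MWS n k C"
  shows "(propA n C \<longrightarrow>
            (\<exists>D :: (nat \<Rightarrow> 'a) set. lin_code (2*n+1) (k+1) D \<and> MWS (2*n+1) (k+1) D))
       \<and> (CARD('a) \<ge> 3 \<and> k \<ge> 1 \<and> propA n C \<and> propB n C \<longrightarrow>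
            (\<exists>D :: (nat \<Rightarrow> 'a) set. lin_code ((CARD('a)-1)*n + (CARD('a)-2) + (maxT n C + 1) * ((CARD('a)-2)*(CARD('a)-3) div 2)) (k+1) D
               \<and> MWS ((CARD('a)-1)*n + (CARD('a)-2) + (maxT n C + 1) * ((CARD('a)-2)*(CARD('a)-3) div 2)) (k+1) D
               \<and> propB ((CARD('a)-1)*n + (CARD('a)-2) + (maxT n C + 1) * ((CARD('a)-2)*(CARD('a)-3) div 2)) D))"
proof (intro conjI impI)
  assume "propA n C"
  then obtain b :: 'a where b: "b \<noteq> 0" "\<forall>x\<in>C. \<forall>y\<in>C. cnt n x b = cnt n y b \<longrightarrow> x = y"
    unfolding propA_def by blast
  show "\<exists>D :: (nat \<Rightarrow> 'a) set. lin_code (2*n+1) (k+1) D \<and> MWS (2*n+1) (k+1) D"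
    by (rule D_exists[OF assms(1) b(1) _ _ assms(2) b(2), where g="\<lambda>_. 1"]) auto
next
  assume H: "CARD('a) \<ge> 3 \<and> k \<ge> 1 \<and> propA n C \<and> propB n C"
  then obtain b :: 'a where b: "b \<noteq> 0" "\<forall>x\<in>C. \<forall>y\<in>C. cnt n x b = cnt n y b \<longrightarrow> x = y"
    unfolding propA_def by blast
  define q where "q = CARD('a)"
  define T where "T = maxT n C"
  have q3: "q \<ge> 3" using H q_def by simp
  define p where "p = q - 2"
  have p: "q = p + 2" using q3 p_def by simp
  have fC: "finite C" and cC: "card C = q ^ k" using code_card[OF assms(1)] q_def by auto
  have n1: "n \<ge> 1"
  proof (rule ccontr)
    assume "\<not> n \<ge> 1"
    then have "n = 0" by simp
    moreover have "C \<subseteq> vecs n" using assms(1) by (simp add: lin_code_def)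
    ultimately have "C \<subseteq> {0}" by (auto simp: vecs_def fun_eq_iff)
    then have "card C \<le> card {0 :: nat \<Rightarrow> 'a}" by (intro card_mono) auto
    moreover have "q ^ k \<ge> q" using H q3 by (intro self_le_power) auto
    ultimately show False using cC q3 by simp
  qed
  have Tb: "\<forall>c\<in>C - {0}. \<forall>z. z \<noteq> 0 \<longrightarrow> cnt n c z \<le> T"
  proof (intro ballI allI impI)
    fix c z assume "c \<in> C - {0}" "z \<noteq> (0::'a)"
    then have mem: "cnt n c z \<in> {cnt n c b | c b. c \<in> C - {0} \<and> b \<noteq> 0}" by blast
    have "{cnt n c b | c b. c \<in> C - {0} \<and> b \<noteq> (0::'a)} \<subseteq> (\<lambda>(c,b). cnt n c b) ` (C \<times> UNIV)"
    proof (rule subsetI)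
      fix w assume "w \<in> {cnt n c b | c b. c \<in> C - {0} \<and> b \<noteq> (0::'a)}"
      then obtain c' b' where "w = cnt n c' b'" "c' \<in> C" by blast
      then show "w \<in> (\<lambda>(c,b). cnt n c b) ` (C \<times> UNIV)"
        by (intro image_eqI[where x="(c',b')"]) auto
    qed
    then have "finite {cnt n c b | c b. c \<in> C - {0} \<and> b \<noteq> (0::'a)}"
      by (rule finite_subset) (simp add: fC)
    then show "cnt n c z \<le> T" unfolding T_def maxT_def using mem by (rule Max_ge)
  qed
  define R where "R = UNIV - {0, - b}"
  have cR: "card R = p"
  proof -
    have "card R = card (UNIV :: 'a set) - card {0, - b}" unfolding R_def by (rule card_Diff_subset) auto
    then show ?thesis using b(1) p q_def by simp
  qed
  obtain h where h: "bij_betw h {0..<card R} R" using ex_bij_betw_nat_finite[of R] by auto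
  define j where "j = inv_into {0..<card R} h"
  have jb: "bij_betw j R {0..<card R}" unfolding j_def by (rule bij_betw_inv_into[OF h])
  have jinj: "inj_on j (UNIV - {0, - b})" using jb R_def bij_betw_imp_inj_on by blast
  define G where "G y = (if y = 0 \<or> y = - b then 0 else n + 1 + j y * (T+1))" for y
  have sG: "sum G UNIV = p * (n+1) + (T+1) * (p * (p - 1) div 2)"
  proof -
    have "sum G UNIV = sum G R + sum G {0, - b}"
      unfolding R_def by (rule sum.subset_diff) auto
    also have "sum G {0, - b} = 0" unfolding G_def by (cases "b = 0") auto
    also have "sum G R = (\<Sum>y\<in>R. n + 1 + j y * (T+1))"
      by (rule sum.cong) (auto simp: G_def R_def)
    also have "\<dots> = (\<Sum>m\<in>{0..<card R}. n + 1 + m * (T+1))"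
      by (rule sum.reindex_bij_betw[OF jb])
    also have "\<dots> = (\<Sum>m\<in>{0..<p}. n + 1) + (\<Sum>m\<in>{0..<p}. m * (T+1))"
      unfolding cR by (rule sum.distrib)
    also have "\<dots> = p * (n+1) + (T+1) * (\<Sum>m<p. m)"
      by (simp add: sum.distrib sum_distrib_left lessThan_atLeast0 mult.commute)
    also have "(\<Sum>m<p. m) = p * (p - 1) div 2" using gauss_lt[of p] by simp
    finally show ?thesis by simp
  qed
  define N where "N = (q-1)*n + (q-2) + (T + 1) * ((q-2)*(q-3) div 2)"
  have NG: "N = n + sum G UNIV"
  proof -
    have "(q-2)*(q-3) = p * (p - 1)" using p by (simp add: algebra_simps)
    moreover have "(q-1)*n + (q-2) = n + p * (n+1)" using p by (simp add: algebra_simps)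
    ultimately show ?thesis unfolding N_def sG by simp
  qed
  obtain g :: "nat \<Rightarrow> 'a" where g: "\<forall>y. card {i\<in>{n..<N}. g i = y} = G y"
    using exists_g[of n G] NG by auto
  have gnz: "\<forall>i\<in>{n..<N}. g i \<noteq> 0"
  proof
    fix i assume i: "i \<in> {n..<N}"
    have "card {i\<in>{n..<N}. g i = 0} = 0" using g unfolding G_def by simp
    then have "{i\<in>{n..<N}. g i = 0} = {}" by simp
    then show "g i \<noteq> 0" using i by blast
  qed
  have NN: "2*n+1 \<le> N"
  proof -
    have "p \<ge> 1" using q3 p by simp
    then have "p * (n+1) \<ge> n + 1" using mult_le_mono1[of 1 p "n+1"] by simp
    then show ?thesis using NG sG by simp
  qed
  have "\<exists>D :: (nat \<Rightarrow> 'a) set. lin_code N (k+1) D \<and> MWS N (k+1) D \<and> propB N D"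
  proof -
    have pB: "propB n C" using H by simp
    have hG: "\<forall>y. card {i\<in>{n..<N}. g i = y} = (if y = 0 \<or> y = - b then 0 else n + 1 + j y * (T+1))"
      using g unfolding G_def by blast
    show ?thesis by (rule D_exists_B[OF assms(1) b(1) NN gnz assms(2) b(2) pB n1 Tb hG jinj])
  qed
  then show "\<exists>D :: (nat \<Rightarrow> 'a) set. lin_code ((CARD('a)-1)*n + (CARD('a)-2) + (maxT n C + 1) * ((CARD('a)-2)*(CARD('a)-3) div 2)) (k+1) D
               \<and> MWS ((CARD('a)-1)*n + (CARD('a)-2) + (maxT n C + 1) * ((CARD('a)-2)*(CARD('a)-3) div 2)) (k+1) D
               \<and> propB ((CARD('a)-1)*n + (CARD('a)-2) + (maxT n C + 1) * ((CARD('a)-2)*(CARD('a)-3) div 2)) D"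
    unfolding N_def q_def T_def .
qed

end
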